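(* Let $n\ge1$, $m\in\mathbb Z_+^n$, $c_\alpha\in\mathbb C$ for $0\le\alpha\le m$ with $c_m\ne0$ (and $c_\alpha=0$ otherwise), $P(z)=\sum_{0\le\alpha\le m}c_\alpha z^\alpha$, and $X_0=\{\tau\in\mathbb Z^n:\tau\ge0,\ \tau\not\ge m\}$. For $\tau_0\in X_0$, let $f_{\tau_0}:\mathbb Z_+^n\to\mathbb C$ (the discrete Green function) be the solution of $\sum_{0\le\alpha\le m}c_\alpha f(x+\alpha)=0$ ($x\in\mathbb Z_+^n$) with $f(x)=1$ if $x=\tau_0$ and $f(x)=0$ for $x\in X_0\setminus\{\tau_0\}$, and assume that its generating function $F_{\tau_0}(z)=\sum_{x\ge0}f_{\tau_0}(x)/z^{x+I}$ converges in some neighborhood of infinity. Then $F_{\tau_0}$ is rational and $$F_{\tau_0}(z)=\Big(\sum_{\alpha\le m,\ \alpha\not\le\tau_0}c_\alpha z^{\alpha-\tau_0-I}\Big)\Big/P(z).$$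
   Context: $x\le y$ is componentwise; $\tau\not\ge m$ (resp. $\alpha\not\le\tau_0$) means that $\tau\ge m$ (resp. $\alpha\le\tau_0$) fails; $I=(1,\dots,1)$; $z^x=\prod z_k^{x_k}$. *)

theory Defs
  imports "HOL-Analysis.Analysis"
begin

text \<open>Multi-indices are functions 'n \<Rightarrow> nat (finite index type 'n, n = CARD('n) \<ge> 1);
  points are 'n \<Rightarrow> complex. The order on functions is the componentwise one from Main.\<close>

definition mpow :: "('n::finite \<Rightarrow> complex) \<Rightarrow> ('n \<Rightarrow> nat) \<Rightarrow> complex" where
  "mpow z x = (\<Prod>k\<in>UNIV. z k ^ x k)"

definition X0 :: "('n::finite \<Rightarrow> nat) \<Rightarrow> ('n \<Rightarrow> nat) set" where
  "X0 m = {\<tau>. \<not> (m \<le> \<tau>)}"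

definition charpoly :: "(('n::finite \<Rightarrow> nat) \<Rightarrow> complex) \<Rightarrow> ('n \<Rightarrow> nat) \<Rightarrow> ('n \<Rightarrow> complex) \<Rightarrow> complex" where
  "charpoly c m z = (\<Sum>\<alpha>\<in>{\<alpha>. \<alpha> \<le> m}. c \<alpha> * mpow z \<alpha>)"

definition genfun :: "(('n::finite \<Rightarrow> nat) \<Rightarrow> complex) \<Rightarrow> ('n \<Rightarrow> complex) \<Rightarrow> complex" where
  "genfun f z = infsum (\<lambda>x. f x / (\<Prod>k\<in>UNIV. z k ^ (x k + 1))) UNIV"

definition numer :: "(('n::finite \<Rightarrow> nat) \<Rightarrow> complex) \<Rightarrow> ('n \<Rightarrow> nat) \<Rightarrow> ('n \<Rightarrow> nat) \<Rightarrow> ('n \<Rightarrow> complex) \<Rightarrow> complex" where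
  "numer c m \<tau>0 z = (\<Sum>\<alpha>\<in>{\<alpha>. \<alpha> \<le> m \<and> \<not> (\<alpha> \<le> \<tau>0)}.
      c \<alpha> * (\<Prod>k\<in>UNIV. z k powi (int (\<alpha> k) - int (\<tau>0 k) - 1)))"

end

theory Submission
  imports Defs
begin

lemma infsum_finsum:
  fixes G :: "'a \<Rightarrow> 'b \<Rightarrow> complex"
  assumes "finite S" "\<And>a. a \<in> S \<Longrightarrow> G a summable_on A"
  shows "infsum (\<lambda>y. \<Sum>a\<in>S. G a y) A = (\<Sum>a\<in>S. infsum (G a) A)
         \<and> (\<lambda>y. \<Sum>a\<in>S. G a y) summable_on A"
  using assms
proof (induction S rule: finite_induct)
  case empty
  then show ?case by simp
next
  case (insert a S)
  then have IH: "infsum (\<lambda>y. \<Sum>a\<in>S. G a y) A = (\<Sum>a\<in>S. infsum (G a) A)"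
     "(\<lambda>y. \<Sum>a\<in>S. G a y) summable_on A" by auto
  have Ga: "G a summable_on A" using insert by auto
  show ?case using insert(1,2) IH Ga
    by (simp add: infsum_add summable_on_add)
qed

lemma finite_le: "finite {\<alpha> :: 'n::finite \<Rightarrow> nat. \<alpha> \<le> m}"
proof -
  have "{\<alpha> :: 'n \<Rightarrow> nat. \<alpha> \<le> m} \<subseteq> PiE UNIV (\<lambda>k. {..m k})"
    by (auto simp: le_fun_def PiE_def Pi_def)
  moreover have "finite (PiE (UNIV::'n set) (\<lambda>k. {..m k}))"
    by (rule finite_PiE) auto
  ultimately show ?thesis by (rule finite_subset)
qed

theorem proposition1:
  fixes m :: "'n::finite \<Rightarrow> nat"
    and c :: "('n \<Rightarrow> nat) \<Rightarrow> complex"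
    and f :: "('n \<Rightarrow> nat) \<Rightarrow> complex"
    and \<tau>0 :: "'n \<Rightarrow> nat"
    and R :: real
  assumes cm: "c m \<noteq> 0"
    and c_zero: "\<And>\<alpha>. \<not> (\<alpha> \<le> m) \<Longrightarrow> c \<alpha> = 0"
    and tau0: "\<tau>0 \<in> X0 m"
    and rec: "\<And>x. (\<Sum>\<alpha>\<in>{\<alpha>. \<alpha> \<le> m}. c \<alpha> * f (\<lambda>k. x k + \<alpha> k)) = 0"
    and init1: "f \<tau>0 = 1"
    and init0: "\<And>x. x \<in> X0 m - {\<tau>0} \<Longrightarrow> f x = 0"
    and R_pos: "R > 0"
    and conv: "\<And>z. (\<forall>k. R < norm (z k)) \<Longrightarrow>
                 (\<lambda>x. f x / (\<Prod>k\<in>UNIV. z k ^ (x k + 1))) summable_on UNIV"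
  shows "(\<forall>z. (\<forall>k. R < norm (z k)) \<longrightarrow> charpoly c m z * genfun f z = numer c m \<tau>0 z)
       \<and> (\<forall>z. (\<forall>k. R < norm (z k)) \<and> charpoly c m z \<noteq> 0 \<longrightarrow>
              genfun f z = numer c m \<tau>0 z / charpoly c m z)"
proof -
  have main: "charpoly c m z * genfun f z = numer c m \<tau>0 z" if zR: "\<forall>k. R < norm (z k)" for z
  proof -
    have znz: "z k \<noteq> 0" for k using zR R_pos by (metis norm_zero not_less_iff_gr_or_eq)
    define w where "w x = (\<Prod>k\<in>UNIV. z k ^ (x k + 1))" for x :: "'n \<Rightarrow> nat"
    have wnz: "w x \<noteq> 0" for x unfolding w_def using znz by simp
    define g where "g x = f x / w x" for x
    have gs: "g summable_on UNIV" using conv[OF zR] unfolding g_def w_def by simp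
    define h where "h \<alpha> y = (\<lambda>k. y k + \<alpha> k)" for \<alpha> y :: "'n \<Rightarrow> nat"
    define G where "G \<alpha> y = f (h \<alpha> y) / w y" for \<alpha> y
    define N where "N \<alpha> = (\<Prod>k\<in>UNIV. z k powi (int (\<alpha> k) - int (\<tau>0 k) - 1))" for \<alpha> :: "'n \<Rightarrow> nat"
    have hinj: "inj (h \<alpha>)" for \<alpha>
      unfolding h_def inj_def by (auto simp: fun_eq_iff)
    have himg: "range (h \<alpha>) = {x. \<alpha> \<le> x}" for \<alpha>
    proof
      show "range (h \<alpha>) \<subseteq> {x. \<alpha> \<le> x}" by (auto simp: h_def le_fun_def)
      show "{x. \<alpha> \<le> x} \<subseteq> range (h \<alpha>)"
      proof
        fix x assume "x \<in> {x. \<alpha> \<le> x}"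
        then have "x = h \<alpha> (\<lambda>k. x k - \<alpha> k)" by (auto simp: h_def le_fun_def fun_eq_iff)
        then show "x \<in> range (h \<alpha>)" by blast
      qed
    qed
    have key: "mpow z \<alpha> * g (h \<alpha> y) = G \<alpha> y" for \<alpha> y
    proof -
      have "w (h \<alpha> y) = mpow z \<alpha> * w y"
        unfolding w_def mpow_def h_def
        by (simp add: prod.distrib[symmetric] power_add algebra_simps)
      then show ?thesis unfolding g_def G_def using wnz
        by (simp add: field_simps) (metis mpow_def prod_zero_iff finite znz power_not_zero wnz mult_eq_0_iff)
    qed
    have step: "mpow z \<alpha> * infsum g UNIV = infsum (G \<alpha>) UNIV + (if \<alpha> \<le> \<tau>0 then 0 else N \<alpha>)
                \<and> G \<alpha> summable_on UNIV" if am: "\<alpha> \<le> m" for \<alpha>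
    proof -
      let ?A = "{x. \<alpha> \<le> x}"
      have sA: "g summable_on ?A" using gs summable_on_subset_banach by blast
      have sB: "g summable_on (-?A)" using gs summable_on_subset_banach by blast
      have split: "infsum g UNIV = infsum g ?A + infsum g (-?A)"
        using infsum_Un_disjoint[OF sA sB] by (simp add: Un_commute)
      have sGc: "(g \<circ> h \<alpha>) summable_on UNIV"
        using sA summable_on_reindex[OF hinj[of \<alpha>]] himg by metis
      have eqA: "infsum g ?A = infsum (g \<circ> h \<alpha>) UNIV"
        using infsum_reindex[OF hinj[of \<alpha>]] himg by metis
      have Geq: "G \<alpha> = (\<lambda>y. mpow z \<alpha> * (g \<circ> h \<alpha>) y)" using key by (auto simp: fun_eq_iff)
      have sG: "G \<alpha> summable_on UNIV" unfolding Geq by (rule summable_on_cmult_right[OF sGc])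
      have p1: "mpow z \<alpha> * infsum g ?A = infsum (G \<alpha>) UNIV"
        unfolding eqA Geq by (rule infsum_cmult_right[symmetric]) (use sGc in auto)
      have p2: "infsum g (-?A) = (if \<alpha> \<le> \<tau>0 then 0 else g \<tau>0)"
      proof -
        have "infsum g (-?A) = infsum g (-?A \<inter> {\<tau>0})"
        proof (rule infsum_cong_neutral)
          fix x assume x: "x \<in> -?A - (-?A \<inter> {\<tau>0})"
          then have "\<not> m \<le> x" using am by (auto intro: order_trans)
          then have "x \<in> X0 m - {\<tau>0}" using x by (auto simp: X0_def)
          then show "g x = 0" using init0 g_def by simp
        qed auto
        also have "\<dots> = (if \<alpha> \<le> \<tau>0 then 0 else g \<tau>0)"
          by (cases "\<alpha> \<le> \<tau>0") auto
        finally show ?thesis .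
      qed
      have p3: "mpow z \<alpha> * g \<tau>0 = N \<alpha>"
      proof -
        have "mpow z \<alpha> * g \<tau>0 = (\<Prod>k\<in>UNIV. z k ^ \<alpha> k / z k ^ (\<tau>0 k + 1))"
          unfolding g_def w_def mpow_def init1 by (simp add: prod_dividef)
        also have "\<dots> = N \<alpha>" unfolding N_def
        proof (rule prod.cong[OF refl])
          fix k
          have "z k powi (int (\<alpha> k) - int (\<tau>0 k) - 1) = z k powi (int (\<alpha> k) - int (\<tau>0 k + 1))"
            by (simp add: algebra_simps)
          also have "\<dots> = z k powi int (\<alpha> k) / z k powi int (\<tau>0 k + 1)"
            by (rule power_int_diff) (simp add: znz)
          also have "\<dots> = z k ^ \<alpha> k / z k ^ (\<tau>0 k + 1)"
            by (simp only: power_int_of_nat)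
          finally show "z k ^ \<alpha> k / z k ^ (\<tau>0 k + 1) = z k powi (int (\<alpha> k) - int (\<tau>0 k) - 1)"
            by simp
        qed
        finally show ?thesis .
      qed
      show ?thesis using split p1 p2 p3 sG by (simp add: distrib_left)
    qed
    let ?S = "{\<alpha>. \<alpha> \<le> m}"
    have "charpoly c m z * genfun f z = (\<Sum>\<alpha>\<in>?S. c \<alpha> * (mpow z \<alpha> * infsum g UNIV))"
      unfolding charpoly_def genfun_def g_def w_def by (simp add: sum_distrib_right mult.assoc)
    also have "\<dots> = (\<Sum>\<alpha>\<in>?S. infsum (\<lambda>y. c \<alpha> * G \<alpha> y) UNIV) + (\<Sum>\<alpha>\<in>?S. c \<alpha> * (if \<alpha> \<le> \<tau>0 then 0 else N \<alpha>))"
      by (simp add: step infsum_cmult_right' distrib_left sum.distrib[symmetric])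
    also have "(\<Sum>\<alpha>\<in>?S. infsum (\<lambda>y. c \<alpha> * G \<alpha> y) UNIV) = infsum (\<lambda>y. \<Sum>\<alpha>\<in>?S. c \<alpha> * G \<alpha> y) UNIV"
    proof -
      have "\<And>a. a \<in> ?S \<Longrightarrow> (\<lambda>y. c a * G a y) summable_on UNIV"
        using step summable_on_cmult_right by blast
      from infsum_finsum[of ?S "\<lambda>\<alpha> y. c \<alpha> * G \<alpha> y" UNIV, OF finite_le this]
      show ?thesis by (simp only:)
    qed
    also have "\<dots> = 0"
    proof (rule infsum_0)
      fix y
      have "(\<Sum>\<alpha>\<in>?S. c \<alpha> * G \<alpha> y) = (\<Sum>\<alpha>\<in>?S. c \<alpha> * f (\<lambda>k. y k + \<alpha> k)) / w y"
        unfolding G_def h_def by (simp add: sum_divide_distrib)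
      then show "(\<Sum>\<alpha>\<in>?S. c \<alpha> * G \<alpha> y) = 0" using rec by simp
    qed
    also have "(\<Sum>\<alpha>\<in>?S. c \<alpha> * (if \<alpha> \<le> \<tau>0 then 0 else N \<alpha>)) = numer c m \<tau>0 z"
      unfolding numer_def N_def
      by (rule sum.mono_neutral_cong_right) (auto simp: finite_le)
    finally show ?thesis by simp
  qed
  show ?thesis
    using main by (auto simp: field_simps)
qed

end
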